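(* Let $n\ge 2$ and let $(T,A(T),B(T))$ be a clean, $d$-sparse signed tree model of an $n$-vertex graph $G$, where $T$ is an ordered full rooted binary tree whose leaves, read from left to right, are $1,\dots,n$ (so $V(G)=[n]$). Let $R$ be the full, complete rooted binary tree whose leaves are $1,\dots,n$ from left to right (so $R$ has depth $\lceil\log n\rceil+1$). Then there exist sets $A(R),B(R)$ such that $(R,A(R),B(R))$ is a $4d\log^2 n$-sparse signed tree model of $G$.
   Context: Tree notation: for a rooted tree $T$, $u\prec_T u'$ means $u$ is a strict ancestor of $u'$, $u\preceq_T u'$ means $u=u'$ or $u\prec_T u'$; for unordered pairs, $uv\preceq_T u'v'$ means ($u\preceq_T u'$ and $v\preceq_T v'$) or ($v\preceq_T u'$ and $u\preceq_T v'$), and $uv\prec_T u'v'$ means $uv\preceq_T u'v'$ and $\{u,v\}\ne\{u',v'\}$. Full: every internal node has two children; complete: all levels filled except possibly the last, whose leaves are left-aligned; depth: maximum number of nodes on a root-to-leaf path. A transversal pair of $T$ is a pair of distinct nodes neither an ancestor of the other; two transversal pairs cross if their endpoints can be named $\{a,b\},\{a',b'\}$ with $a\prec_T a'$ and $b'\prec_T b$. A signed tree model is $(T,A(T),B(T))$ with $T$ a full rooted binary tree and $A(T),B(T)$ disjoint sets of transversal pairs of $T$, no two pairs of $A(T)\cup B(T)$ crossing. It is a model of the graph on the leaf set $L(T)$ in which distinct leaves $u,v$ are adjacent iff some $u'v'\in B(T)$ has $u'v'\preceq_T uv$ and no $u''v''\in A(T)$ has $u'v'\prec_T u''v''\preceq_T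 uv$. It is clean if every pair of siblings of $T$ lies in $A(T)\cup B(T)$, and $c$-sparse if $|A(T)\cup B(T)|\le c\,|V(T)|$. $\log$ is base 2. *)

theory Defs
  imports Complex_Main "HOL-Library.Sublist"
begin

text \<open>Nodes are identified with their positions: bool lists (False = left child, True = right child).
  Ancestor relation = prefix relation on positions.\<close>

datatype btree = Lf nat | Nd btree btree

fun pos :: "btree \<Rightarrow> bool list set" where
  "pos (Lf a) = {[]}"
| "pos (Nd l r) = {[]} \<union> Cons False ` pos l \<union> Cons True ` pos r"

fun leaves :: "btree \<Rightarrow> nat list" where
  "leaves (Lf a) = [a]"
| "leaves (Nd l r) = leaves l @ leaves r"

fun sub :: "btree \<Rightarrow> bool list \<Rightarrow> btree" where
  "sub t [] = t"
| "sub (Nd l r) (b # p) = sub (if b then r else l) p"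
| "sub (Lf a) (b # p) = Lf a"

definition is_leaf_pos :: "btree \<Rightarrow> bool list \<Rightarrow> bool" where
  "is_leaf_pos t p \<longleftrightarrow> p \<in> pos t \<and> (\<exists>a. sub t p = Lf a)"

definition lbl :: "btree \<Rightarrow> bool list \<Rightarrow> nat" where
  "lbl t p = (case sub t p of Lf a \<Rightarrow> a | Nd _ _ \<Rightarrow> 0)"

definition internal_pos :: "btree \<Rightarrow> bool list \<Rightarrow> bool" where
  "internal_pos t p \<longleftrightarrow> p \<in> pos t \<and> \<not> is_leaf_pos t p"

text \<open>Unordered pairs are 2-element sets.\<close>

definition transversal :: "btree \<Rightarrow> bool list set \<Rightarrow> bool" where
  "transversal t P \<longleftrightarrow> (\<exists>u v. P = {u, v} \<and> u \<noteq> v \<and> u \<in> pos t \<and> v \<in> pos t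
       \<and> \<not> prefix u v \<and> \<not> prefix v u)"

definition pair_le :: "bool list set \<Rightarrow> bool list set \<Rightarrow> bool" where
  "pair_le P Q \<longleftrightarrow> (\<exists>u v u' v'. P = {u, v} \<and> Q = {u', v'} \<and> prefix u u' \<and> prefix v v')"

definition pair_lt :: "bool list set \<Rightarrow> bool list set \<Rightarrow> bool" where
  "pair_lt P Q \<longleftrightarrow> pair_le P Q \<and> P \<noteq> Q"

definition cross :: "bool list set \<Rightarrow> bool list set \<Rightarrow> bool" where
  "cross P Q \<longleftrightarrow> (\<exists>a b a' b'. P = {a, b} \<and> Q = {a', b'} \<and> strict_prefix a a' \<and> strict_prefix b' b)"

definition signed_tree_model :: "btree \<Rightarrow> bool list set set \<Rightarrow> bool list set set \<Rightarrow> bool" where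
  "signed_tree_model t A B \<longleftrightarrow>
     A \<inter> B = {} \<and> (\<forall>P \<in> A \<union> B. transversal t P)
     \<and> (\<forall>P \<in> A \<union> B. \<forall>Q \<in> A \<union> B. \<not> cross P Q)"

definition model_adj :: "bool list set set \<Rightarrow> bool list set set \<Rightarrow> bool list \<Rightarrow> bool list \<Rightarrow> bool" where
  "model_adj A B u v \<longleftrightarrow>
     (\<exists>P \<in> B. pair_le P {u, v} \<and> \<not> (\<exists>Q \<in> A. pair_lt P Q \<and> pair_le Q {u, v}))"

definition models_graph :: "btree \<Rightarrow> bool list set set \<Rightarrow> bool list set set \<Rightarrow> (nat \<Rightarrow> nat \<Rightarrow> bool) \<Rightarrow> bool" where
  "models_graph t A B E \<longleftrightarrow> signed_tree_model t A B \<and>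
     (\<forall>u v. is_leaf_pos t u \<longrightarrow> is_leaf_pos t v \<longrightarrow> u \<noteq> v \<longrightarrow>
        (E (lbl t u) (lbl t v) \<longleftrightarrow> model_adj A B u v))"

definition clean :: "btree \<Rightarrow> bool list set set \<Rightarrow> bool list set set \<Rightarrow> bool" where
  "clean t A B \<longleftrightarrow> (\<forall>p. internal_pos t p \<longrightarrow> {p @ [False], p @ [True]} \<in> A \<union> B)"

definition sparse :: "real \<Rightarrow> btree \<Rightarrow> bool list set set \<Rightarrow> bool list set set \<Rightarrow> bool" where
  "sparse c t A B \<longleftrightarrow> real (card (A \<union> B)) \<le> c * real (card (pos t))"

text \<open>Value of a position read as a binary number (False = 0, True = 1): left-to-right order
  on positions of equal length.\<close>
definition bits_val :: "bool list \<Rightarrow> nat" where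
  "bits_val p = foldl (\<lambda>a b. 2 * a + (if b then 1 else 0)) 0 p"

definition complete :: "btree \<Rightarrow> bool" where
  "complete t \<longleftrightarrow> (\<exists>h. (\<forall>p. length p < h \<longrightarrow> p \<in> pos t)
       \<and> (\<forall>p \<in> pos t. length p \<le> h)
       \<and> (\<forall>p q. length p = h \<longrightarrow> length q = h \<longrightarrow> q \<in> pos t \<longrightarrow> bits_val p \<le> bits_val q \<longrightarrow> p \<in> pos t))"

end

theory Submission
  imports Defs
begin


definition L :: "btree \<Rightarrow> bool list \<Rightarrow> nat set" where
  "L t p = set (leaves (sub t p))"

lemma leaves_ne: "leaves t \<noteq> []"
  by (induction t) auto

lemma sub_Lf[simp]: "sub (Lf a) q = Lf a"
  by (cases q) auto

lemma pos_Nil[simp]: "[] \<in> pos t"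
  by (cases t) auto

lemma sub_append: "sub t (p @ q) = sub (sub t p) q"
proof (induction p arbitrary: t)
  case Nil then show ?case by simp
next
  case (Cons b p) then show ?case
  proof (cases t)
    case (Lf a) then show ?thesis by simp
  next
    case (Nd l r) then show ?thesis using Cons by simp
  qed
qed

lemma pos_append: "p @ q \<in> pos t \<longleftrightarrow> p \<in> pos t \<and> q \<in> pos (sub t p)"
proof (induction p arbitrary: t)
  case Nil then show ?case by simp
next
  case (Cons b p) then show ?case
    by (cases t) (auto simp: image_iff)
qed

lemma pos_Nd_Cons[simp]: "(b # p \<in> pos (Nd l r)) \<longleftrightarrow> p \<in> pos (if b then r else l)"
  by (cases b) auto

declare pos.simps(2)[simp del]

lemma is_leaf_Nd_Cons[simp]: "is_leaf_pos (Nd l r) (b # p) \<longleftrightarrow> is_leaf_pos (if b then r else l) p"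
  by (simp add: is_leaf_pos_def)

lemma lbl_Nd_Cons[simp]: "lbl (Nd l r) (b # p) = lbl (if b then r else l) p"
  by (simp add: lbl_def)

lemma pos_Lf[simp]: "p \<in> pos (Lf a) \<longleftrightarrow> p = []"
  by simp

lemma L_Nd_Cons[simp]: "L (Nd l r) (b # p) = L (if b then r else l) p"
  by (simp add: L_def)

lemma L_Nil: "L t [] = set (leaves t)"
  by (simp add: L_def)

lemma L_ne: "L t p \<noteq> {}"
  by (simp add: L_def leaves_ne)

lemma leaves_sub_subset: "set (leaves (sub t q)) \<subseteq> set (leaves t)"
proof (induction t q rule: sub.induct)
qed auto

lemma G1: "prefix u v \<Longrightarrow> L t v \<subseteq> L t u"
  by (auto simp: prefix_def L_def sub_append dest: leaves_sub_subset[THEN subsetD])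

lemma distinct_sub: "distinct (leaves t) \<Longrightarrow> distinct (leaves (sub t q))"
proof (induction t q rule: sub.induct)
qed auto

lemma G2: "distinct (leaves t) \<Longrightarrow> u \<in> pos t \<Longrightarrow> v \<in> pos t \<Longrightarrow> \<not> prefix u v \<Longrightarrow> \<not> prefix v u
  \<Longrightarrow> L t u \<inter> L t v = {}"
proof (induction t arbitrary: u v)
  case (Lf a) then show ?case by simp
next
  case (Nd l r)
  obtain b u' where u: "u = b # u'" using Nd.prems by (cases u) auto
  obtain c v' where v: "v = c # v'" using Nd.prems by (cases v) auto
  show ?case
  proof (cases "b = c")
    case True
    show ?thesis
    proof (cases b)
      case b: True
      have "u' \<in> pos r" "v' \<in> pos r" using Nd.prems u v True b by auto
      then have "L r u' \<inter> L r v' = {}"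
        using Nd.IH(2)[of u' v'] Nd.prems u v True b by simp
      then show ?thesis using u v True b by simp
    next
      case b: False
      have "u' \<in> pos l" "v' \<in> pos l" using Nd.prems u v True b by auto
      then have "L l u' \<inter> L l v' = {}"
        using Nd.IH(1)[of u' v'] Nd.prems u v True b by simp
      then show ?thesis using u v True b by simp
    qed
  next
    case False
    have "L l u' \<subseteq> set (leaves l)" "L r u' \<subseteq> set (leaves r)"
      "L l v' \<subseteq> set (leaves l)" "L r v' \<subseteq> set (leaves r)"
      by (auto simp: L_def dest: leaves_sub_subset[THEN subsetD])
    moreover have "set (leaves l) \<inter> set (leaves r) = {}" using Nd.prems(1) by simp
    ultimately show ?thesis using False u v by (cases b; cases c) auto
  qed
qed

lemma G5: "distinct (leaves t) \<Longrightarrow> u \<in> pos t \<Longrightarrow> v \<in> pos t \<Longrightarrow> a \<in> L t u \<Longrightarrow> a \<in> L t v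
  \<Longrightarrow> prefix u v \<or> prefix v u"
  using G2 by blast

lemma G4: "distinct (leaves t) \<Longrightarrow> u \<in> pos t \<Longrightarrow> strict_prefix v u \<Longrightarrow> L t u \<noteq> L t v"
proof -
  assume d: "distinct (leaves t)" and u: "u \<in> pos t" and sp: "strict_prefix v u"
  obtain c w where uw: "u = v @ c # w"
    using sp by (rule strict_prefixE')
  have vp: "c # w \<in> pos (sub t v)" using u uw pos_append by blast
  then obtain l r where s: "sub t v = Nd l r" by (cases "sub t v") auto
  have ds: "distinct (leaves (Nd l r))" using distinct_sub[OF d, of v] s by simp
  have Lu: "L t u = L (Nd l r) (c # w)" by (simp add: L_def uw sub_append s)
  have f1: "L t u \<subseteq> set (leaves (if c then r else l))"
    using Lu by (auto simp: L_def dest: leaves_sub_subset[THEN subsetD])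
  have f2: "L t v = set (leaves l) \<union> set (leaves r)" by (simp add: L_def s)
  have f3: "set (leaves l) \<inter> set (leaves r) = {}" using ds by simp
  have f4: "set (leaves l) \<noteq> {}" "set (leaves r) \<noteq> {}" by (simp_all add: leaves_ne)
  show ?thesis
  proof
    assume eq: "L t u = L t v"
    show False
    proof (cases c)
      case True
      then have "set (leaves l) \<subseteq> set (leaves r)" using f1 f2 eq by simp
      then have "set (leaves l) \<inter> set (leaves r) = set (leaves l)" by (rule Int_absorb2)
      then have "set (leaves l) = {}" using f3  by simp
      then show False using f4 by simp
    next
      case False
      then have "set (leaves r) \<subseteq> set (leaves l)" using f1 f2 eq by simp
      then have "set (leaves r) \<inter> set (leaves l) = set (leaves r)" by (rule Int_absorb2)
      then have "set (leaves r) = {}" using f3 Int_commute by (simp add: Int_commute)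
      then show False using f4 by simp
    qed
  qed
qed

lemma G6: "distinct (leaves t) \<Longrightarrow> u \<in> pos t \<Longrightarrow> v \<in> pos t \<Longrightarrow> L t v \<subseteq> L t u \<Longrightarrow> prefix u v"
proof -
  assume d: "distinct (leaves t)" and u: "u \<in> pos t" and v: "v \<in> pos t" and s: "L t v \<subseteq> L t u"
  obtain a where a: "a \<in> L t v" using L_ne[of t v] by blast
  have au: "a \<in> L t u" using s a by (rule subsetD)
  have c: "prefix u v \<or> prefix v u" using G5[OF d u v au a] .
  show ?thesis
  proof (cases "prefix u v")
    case True then show ?thesis .
  next
    case False
    then have pv: "prefix v u" using c by simp
    have ne: "u \<noteq> v" using False by auto
    have "strict_prefix v u" using pv ne by (simp add: strict_prefix_def)
    then have "L t u \<noteq> L t v" using G4[OF d u] by simp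
    moreover have "L t u \<subseteq> L t v" using G1[OF pv] .
    ultimately show ?thesis using s by simp
  qed
qed

lemma leaf_L: "is_leaf_pos t w \<Longrightarrow> L t w = {lbl t w}"
  by (auto simp: is_leaf_pos_def L_def lbl_def)

lemma leaf_ext: "is_leaf_pos t w \<Longrightarrow> prefix w u \<Longrightarrow> u \<in> pos t \<Longrightarrow> u = w"
  by (auto simp: is_leaf_pos_def prefix_def pos_append)

lemma in_L_iff: "distinct (leaves t) \<Longrightarrow> is_leaf_pos t w \<Longrightarrow> u \<in> pos t \<Longrightarrow>
   lbl t w \<in> L t u \<longleftrightarrow> prefix u w"
proof
  assume d: "distinct (leaves t)" and w: "is_leaf_pos t w" and u: "u \<in> pos t" and a: "lbl t w \<in> L t u"
  have wp: "w \<in> pos t" using w by (simp add: is_leaf_pos_def)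
  have "lbl t w \<in> L t w" using leaf_L[OF w] by simp
  then have "prefix u w \<or> prefix w u" using G5[OF d u wp a] by blast
  moreover have "prefix w u \<Longrightarrow> u = w" using leaf_ext[OF w _ u] by blast
  ultimately show "prefix u w" by blast
next
  assume w: "is_leaf_pos t w" and p: "prefix u w"
  have "lbl t w \<in> L t w" using leaf_L[OF w] by simp
  then show "lbl t w \<in> L t u" using G1[OF p, of t] by blast
qed

lemma leaf_exists: "a \<in> set (leaves t) \<Longrightarrow> \<exists>w. is_leaf_pos t w \<and> lbl t w = a"
proof (induction t)
  case (Lf x)
  have "is_leaf_pos (Lf x) [] \<and> lbl (Lf x) [] = x" by (simp add: is_leaf_pos_def lbl_def)
  then show ?case using Lf by auto
next
  case (Nd l r)
  show ?case
  proof (cases "a \<in> set (leaves l)")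
    case True
    then obtain w where "is_leaf_pos l w" "lbl l w = a" using Nd by blast
    then have "is_leaf_pos (Nd l r) (False # w) \<and> lbl (Nd l r) (False # w) = a" by simp
    then show ?thesis by blast
  next
    case False
    then have "a \<in> set (leaves r)" using Nd.prems by simp
    then obtain w where "is_leaf_pos r w" "lbl r w = a" using Nd by blast
    then have "is_leaf_pos (Nd l r) (True # w) \<and> lbl (Nd l r) (True # w) = a" by simp
    then show ?thesis by blast
  qed
qed

lemma lbl_in: "is_leaf_pos t w \<Longrightarrow> lbl t w \<in> set (leaves t)"
proof -
  assume w: "is_leaf_pos t w"
  have "lbl t w \<in> L t w" using leaf_L[OF w] by simp
  then show ?thesis unfolding L_def using leaves_sub_subset[of t w] by blast
qed

lemma leaf_inj: "distinct (leaves t) \<Longrightarrow> is_leaf_pos t w1 \<Longrightarrow> is_leaf_pos t w2 \<Longrightarrow> lbl t w1 = lbl t w2 \<Longrightarrow> w1 = w2"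
proof -
  assume d: "distinct (leaves t)" and w1: "is_leaf_pos t w1" and w2: "is_leaf_pos t w2"
    and e: "lbl t w1 = lbl t w2"
  have p1: "w1 \<in> pos t" using w1 by (simp add: is_leaf_pos_def)
  have p2: "w2 \<in> pos t" using w2 by (simp add: is_leaf_pos_def)
  have "lbl t w2 \<in> L t w1" using leaf_L[OF w1] e by simp
  then have "prefix w1 w2" using in_L_iff[OF d w2 p1] by simp
  then show ?thesis using leaf_ext[OF w1 _ p2] by simp
qed

lemma finite_pos: "finite (pos t)"
  by (induction t) (auto simp: pos.simps)

lemma card_pos: "card (pos t) = 2 * length (leaves t) - 1"
proof (induction t)
  case (Lf x) then show ?case by simp
next
  case (Nd l r)
  have e: "pos (Nd l r) = insert [] (Cons False ` pos l \<union> Cons True ` pos r)" by (simp add: pos.simps)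
  have "card (Cons False ` pos l \<union> Cons True ` pos r) = card (Cons False ` pos l) + card (Cons True ` pos r)"
    by (rule card_Un_disjoint) (auto simp: finite_pos)
  also have "\<dots> = card (pos l) + card (pos r)" by (simp add: card_image)
  finally have "card (pos (Nd l r)) = 1 + card (pos l) + card (pos r)"
    unfolding e by (subst card_insert_disjoint) (auto simp: finite_pos)
  then show ?case using Nd leaves_ne[of l] leaves_ne[of r] by (cases "leaves l"; cases "leaves r") auto
qed



fun can :: "nat set \<Rightarrow> btree \<Rightarrow> bool list set" where
  "can S (Lf a) = (if a \<in> S then {[]} else {})"
| "can S (Nd l r) = (if set (leaves (Nd l r)) \<subseteq> S then {[]}
     else Cons False ` can S l \<union> Cons True ` can S r)"

declare can.simps(2)[simp del]

lemma can_full: assumes h: "set (leaves t) \<subseteq> S" shows "can S t = {[]}"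
proof (cases t)
  case (Lf x) then show ?thesis using h by simp
next
  case (Nd l r) show ?thesis using h unfolding Nd can.simps(2) by (rule if_P)
qed

lemma mem_Nd_img: "x \<in> Cons False ` A \<union> Cons True ` B \<Longrightarrow> \<exists>b x'. x = b # x' \<and> x' \<in> (if b then B else A)"
  by force

lemma can_Nd: "\<not> set (leaves (Nd l r)) \<subseteq> S \<Longrightarrow> can S (Nd l r) = Cons False ` can S l \<union> Cons True ` can S r"
  unfolding can.simps(2) by (rule if_not_P)

lemma can_empty: "S \<inter> set (leaves t) = {} \<Longrightarrow> can S t = {}"
proof (induction t)
  case (Lf x) then show ?case by simp
next
  case (Nd l r)
  have "\<not> set (leaves (Nd l r)) \<subseteq> S" using Nd.prems leaves_ne[of l] by (cases "leaves l") auto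
  then show ?case using Nd by (simp add: can_Nd Int_Un_distrib)
qed

lemma C1: "x \<in> can S t \<Longrightarrow> x \<in> pos t \<and> L t x \<subseteq> S"
proof (induction t arbitrary: x)
  case (Lf a) then show ?case by (auto simp: L_def split: if_splits)
next
  case (Nd l r)
  show ?case
  proof (cases "set (leaves (Nd l r)) \<subseteq> S")
    case True then show ?thesis using Nd.prems by (simp add: can_full L_def)
  next
    case False
    then have "x \<in> Cons False ` can S l \<union> Cons True ` can S r" using Nd.prems can_Nd by blast
    then obtain b x' where x: "x = b # x'" and bx0: "x' \<in> (if b then can S r else can S l)"
      using mem_Nd_img by blast
    have bx: "x' \<in> can S (if b then r else l)" using bx0 by (cases b) auto
    have "x' \<in> pos (if b then r else l) \<and> L (if b then r else l) x' \<subseteq> S"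
      using Nd.IH(1)[of x'] Nd.IH(2)[of x'] bx by (cases b) auto
    then show ?thesis using x by simp
  qed
qed

lemma C2: "a \<in> S \<Longrightarrow> a \<in> set (leaves t) \<Longrightarrow> \<exists>x\<in>can S t. a \<in> L t x"
proof (induction t)
  case (Lf x) then show ?case by (auto simp: L_def)
next
  case (Nd l r)
  show ?case
  proof (cases "set (leaves (Nd l r)) \<subseteq> S")
    case True then show ?thesis using Nd.prems by (simp add: can_full L_def)
  next
    case False
    show ?thesis
    proof (cases "a \<in> set (leaves l)")
      case True
      then obtain x where "x \<in> can S l" "a \<in> L l x" using Nd by blast
      then have "False # x \<in> can S (Nd l r)" "a \<in> L (Nd l r) (False # x)" using False by (auto simp: can_Nd)
      then show ?thesis by blast
    next
      case F2: False
      then have "a \<in> set (leaves r)" using Nd.prems by simp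
      then obtain x where "x \<in> can S r" "a \<in> L r x" using Nd by blast
      then have "True # x \<in> can S (Nd l r)" "a \<in> L (Nd l r) (True # x)" using False by (auto simp: can_Nd)
      then show ?thesis by blast
    qed
  qed
qed

lemma C3: "x \<in> can S t \<Longrightarrow> strict_prefix y x \<Longrightarrow> \<not> L t y \<subseteq> S"
proof (induction t arbitrary: x y)
  case (Lf a) then show ?case by (auto split: if_splits)
next
  case (Nd l r)
  show ?case
  proof (cases "set (leaves (Nd l r)) \<subseteq> S")
    case True then show ?thesis using Nd.prems by (simp add: can_full)
  next
    case False
    then have xm: "x \<in> Cons False ` can S l \<union> Cons True ` can S r" using Nd.prems can_Nd by blast
    show ?thesis
    proof (cases y)
      case Nil then show ?thesis using False by (simp add: L_def)
    next
      case (Cons c y')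
      obtain b x' where x: "x = b # x'" and bx0: "x' \<in> (if b then can S r else can S l)"
        using mem_Nd_img[OF xm] by blast
      have bx: "x' \<in> can S (if b then r else l)" using bx0 by (cases b) auto
      have "c = b" "strict_prefix y' x'" using Nd.prems(2) x Cons by auto
      then show ?thesis using Nd.IH bx Cons by (cases b) auto
    qed
  qed
qed

lemma finite_can: "finite (can S t)"
proof -
  have "can S t \<subseteq> pos t" using C1 by blast
  then show ?thesis using finite_pos finite_subset by blast
qed

lemma card_can_Lf: "card (can S (Lf c)) \<le> 1"
  by simp

lemma card_can_Nd: "\<not> set (leaves (Nd l r)) \<subseteq> S \<Longrightarrow> card (can S (Nd l r)) \<le> card (can S l) + card (can S r)"
proof -
  assume h: "\<not> set (leaves (Nd l r)) \<subseteq> S"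
  have "card (can S (Nd l r)) \<le> card (Cons False ` can S l) + card (Cons True ` can S r)"
    unfolding can_Nd[OF h] by (rule card_Un_le)
  also have "\<dots> \<le> card (can S l) + card (can S r)" by (intro add_mono card_image_le finite_can)
  finally show ?thesis .
qed

fun ht :: "btree \<Rightarrow> nat" where
  "ht (Lf a) = 0"
| "ht (Nd l r) = Suc (max (ht l) (ht r))"

lemma split_upt: "leaves l @ leaves r = [a..<b] \<Longrightarrow> \<exists>m. leaves l = [a..<m] \<and> leaves r = [m..<b] \<and> a < m \<and> m < b"
proof -
  assume h: "leaves l @ leaves r = [a..<b]"
  define k where "k = length (leaves l)"
  have len: "k + length (leaves r) = b - a" using arg_cong[OF h, of length] by (simp add: k_def)
  have k1: "k \<ge> 1" using leaves_ne[of l] by (simp add: k_def Suc_le_eq)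
  have r1: "length (leaves r) \<ge> 1" using leaves_ne[of r] by (simp add: Suc_le_eq)
  have "leaves l = take k [a..<b]" using h by (metis append_eq_conv_conj k_def)
  also have "\<dots> = [a..<a+k]" using len r1 by (intro take_upt) linarith
  finally have 1: "leaves l = [a..<a+k]" .
  have "leaves r = drop k [a..<b]" using h by (metis append_eq_conv_conj k_def)
  also have "\<dots> = [a+k..<b]" by simp
  finally have 2: "leaves r = [a+k..<b]" .
  show ?thesis using 1 2 k1 r1 len by (intro exI[of _ "a+k"]) auto
qed

lemma ht_pos_Nd: "0 < ht t \<Longrightarrow> \<exists>l r. t = Nd l r"
  by (cases t) auto

lemma PRE: "leaves t = [a..<b] \<Longrightarrow> i \<le> a \<Longrightarrow> card (can {i..<j} t) \<le> max 1 (ht t)"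
proof (induction t arbitrary: a b)
  case (Lf c) then show ?case by simp
next
  case (Nd l r)
  show ?case
  proof (cases "set (leaves (Nd l r)) \<subseteq> {i..<j}")
    case True then show ?thesis by (simp add: can_full)
  next
    case nf: False
    obtain m where m: "leaves l = [a..<m]" "leaves r = [m..<b]" "a < m" "m < b"
      using split_upt Nd.prems(1) by fastforce
    have cu: "card (can {i..<j} (Nd l r)) \<le> card (can {i..<j} l) + card (can {i..<j} r)"
      using card_can_Nd[OF nf] .
    show ?thesis
    proof (cases "j \<le> m")
      case True
      then have "can {i..<j} r = {}" using m by (intro can_empty) auto
      moreover have "card (can {i..<j} l) \<le> max 1 (ht l)" using Nd.IH(1)[OF m(1)] Nd.prems(2) .
      ultimately show ?thesis using cu by simp
    next
      case False
      have "set (leaves l) \<subseteq> {i..<j}" using m False Nd.prems(2) by auto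
      then have cl: "card (can {i..<j} l) = 1" by (simp add: can_full)
      have cr: "card (can {i..<j} r) \<le> max 1 (ht r)" using Nd.IH(2)[OF m(2)] Nd.prems(2) m(3) by simp
      have "\<not> set (leaves r) \<subseteq> {i..<j}"
      proof
        assume "set (leaves r) \<subseteq> {i..<j}"
        then have "set (leaves (Nd l r)) \<subseteq> {i..<j}" using \<open>set (leaves l) \<subseteq> {i..<j}\<close> by simp
        then show False using nf by simp
      qed
      then have "0 < ht r"
      proof (cases r)
        case (Lf c)
        then have "[m..<b] = [c]" using m(2) by simp
        then have "c = m" "b = Suc m" by (auto simp: upt_eq_Cons_conv)
        then show ?thesis using \<open>\<not> set (leaves r) \<subseteq> {i..<j}\<close> Lf False Nd.prems(2) m(3) by auto
      qed auto
      then show ?thesis using cu cl cr by auto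
    qed
  qed
qed

lemma SUF: "leaves t = [a..<b] \<Longrightarrow> b \<le> j \<Longrightarrow> card (can {i..<j} t) \<le> max 1 (ht t)"
proof (induction t arbitrary: a b)
  case (Lf c) then show ?case by simp
next
  case (Nd l r)
  show ?case
  proof (cases "set (leaves (Nd l r)) \<subseteq> {i..<j}")
    case True then show ?thesis by (simp add: can_full)
  next
    case nf: False
    obtain m where m: "leaves l = [a..<m]" "leaves r = [m..<b]" "a < m" "m < b"
      using split_upt Nd.prems(1) by fastforce
    have cu: "card (can {i..<j} (Nd l r)) \<le> card (can {i..<j} l) + card (can {i..<j} r)"
      using card_can_Nd[OF nf] .
    show ?thesis
    proof (cases "m \<le> i")
      case True
      then have "can {i..<j} l = {}" using m by (intro can_empty) auto
      moreover have "card (can {i..<j} r) \<le> max 1 (ht r)" using Nd.IH(2)[OF m(2)] Nd.prems(2) .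
      ultimately show ?thesis using cu by simp
    next
      case False
      have "set (leaves r) \<subseteq> {i..<j}" using m False Nd.prems(2) by auto
      then have cr: "card (can {i..<j} r) = 1" by (simp add: can_full)
      have cl: "card (can {i..<j} l) \<le> max 1 (ht l)" using Nd.IH(1)[OF m(1)] Nd.prems(2) m(4) by simp
      have "\<not> set (leaves l) \<subseteq> {i..<j}"
      proof
        assume "set (leaves l) \<subseteq> {i..<j}"
        then have "set (leaves (Nd l r)) \<subseteq> {i..<j}" using \<open>set (leaves r) \<subseteq> {i..<j}\<close> by simp
        then show False using nf by simp
      qed
      then have "0 < ht l"
      proof (cases l)
        case (Lf c)
        then have "[a..<m] = [c]" using m(1) by simp
        then have "c = a" "m = Suc a" by (auto simp: upt_eq_Cons_conv)
        then show ?thesis using \<open>\<not> set (leaves l) \<subseteq> {i..<j}\<close> Lf False Nd.prems(2) m(4) by auto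
      qed auto
      then show ?thesis using cu cl cr by auto
    qed
  qed
qed



lemma GEN: "leaves t = [a..<b] \<Longrightarrow> \<not> {a..<b} \<subseteq> {i..<j} \<Longrightarrow> card (can {i..<j} t) \<le> max 1 (2 * ht t - 2)"
proof (induction t arbitrary: a b)
  case (Lf c) then show ?case by simp
next
  case (Nd l r)
  have nf: "\<not> set (leaves (Nd l r)) \<subseteq> {i..<j}" using Nd.prems by simp
  obtain m where m: "leaves l = [a..<m]" "leaves r = [m..<b]" "a < m" "m < b"
    using split_upt Nd.prems(1) by fastforce
  have cu: "card (can {i..<j} (Nd l r)) \<le> card (can {i..<j} l) + card (can {i..<j} r)"
    using card_can_Nd[OF nf] .
  have hl: "ht l \<le> ht (Nd l r) - 1" "ht r \<le> ht (Nd l r) - 1" by auto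
  show ?case
  proof (cases "j \<le> m")
    case True
    then have "can {i..<j} r = {}" using m by (intro can_empty) auto
    moreover have "card (can {i..<j} l) \<le> max 1 (2 * ht l - 2)"
    proof (cases "{a..<m} \<subseteq> {i..<j}")
      case True then show ?thesis using m by (simp add: can_full)
    next
      case False then show ?thesis using Nd.IH(1)[OF m(1)] by simp
    qed
    ultimately show ?thesis using cu hl by auto
  next
    case jm: False
    show ?thesis
    proof (cases "m \<le> i")
      case True
      then have "can {i..<j} l = {}" using m by (intro can_empty) auto
      moreover have "card (can {i..<j} r) \<le> max 1 (2 * ht r - 2)"
      proof (cases "{m..<b} \<subseteq> {i..<j}")
        case True then show ?thesis using m by (simp add: can_full)
      next
        case False then show ?thesis using Nd.IH(2)[OF m(2)] by simp
      qed
      ultimately show ?thesis using cu hl by auto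
    next
      case False
      have cl: "card (can {i..<j} l) \<le> max 1 (ht l)" using SUF[OF m(1), of j i] jm by simp
      have cr: "card (can {i..<j} r) \<le> max 1 (ht r)" using PRE[OF m(2), of i j] False by simp
      have "0 < ht l \<or> 0 < ht r"
      proof (rule ccontr)
        assume "\<not> (0 < ht l \<or> 0 < ht r)"
        then obtain c d where l: "l = Lf c" and r: "r = Lf d" by (cases l; cases r) auto
        have "[a..<m] = [c]" using m(1) l by simp
        then have "m = Suc a" by (auto simp: upt_eq_Cons_conv)
        moreover have "[m..<b] = [d]" using m(2) r by simp
        then have "b = Suc m" by (auto simp: upt_eq_Cons_conv)
        ultimately have "{a..<b} \<subseteq> {i..<j}" using False jm by auto
        then show False using Nd.prems(2) by simp
      qed
      then have "ht (Nd l r) \<ge> 2" by auto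
      then show ?thesis using cu cl cr hl by auto
    qed
  qed
qed

lemma ht_pos: "p \<in> pos t \<Longrightarrow> length p \<le> ht t"
proof (induction t arbitrary: p)
  case (Lf x) then show ?case by simp
next
  case (Nd l r)
  show ?case
  proof (cases p)
    case Nil then show ?thesis by simp
  next
    case (Cons b q)
    then have "q \<in> pos (if b then r else l)" using Nd.prems by simp
    then show ?thesis using Nd.IH Cons by (cases b) fastforce+
  qed
qed

lemma ht_ex: "\<exists>p\<in>pos t. length p = ht t"
proof (induction t)
  case (Lf x) then show ?case by simp
next
  case (Nd l r)
  show ?case
  proof (cases "ht l \<le> ht r")
    case True
    obtain p where "p \<in> pos r" "length p = ht r" using Nd.IH(2) by blast
    then have "True # p \<in> pos (Nd l r)" "length (True # p) = ht (Nd l r)" using True by auto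
    then show ?thesis by blast
  next
    case False
    obtain p where "p \<in> pos l" "length p = ht l" using Nd.IH(1) by blast
    then have "False # p \<in> pos (Nd l r)" "length (False # p) = ht (Nd l r)" using False by auto
    then show ?thesis by blast
  qed
qed

lemma HA: "(\<forall>p. length p \<le> k \<longrightarrow> p \<in> pos t) \<Longrightarrow> 2 ^ k \<le> length (leaves t)"
proof (induction k arbitrary: t)
  case 0 then show ?case using leaves_ne[of t] by (cases "leaves t") auto
next
  case (Suc k)
  have "[False] \<in> pos t" using Suc.prems by auto
  then obtain l r where t: "t = Nd l r" by (cases t) auto
  have "\<forall>p. length p \<le> k \<longrightarrow> p \<in> pos l"
  proof (intro allI impI)
    fix p :: "bool list" assume "length p \<le> k"
    then have "False # p \<in> pos t" using Suc.prems by auto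
    then show "p \<in> pos l" using t by simp
  qed
  moreover have "\<forall>p. length p \<le> k \<longrightarrow> p \<in> pos r"
  proof (intro allI impI)
    fix p :: "bool list" assume "length p \<le> k"
    then have "True # p \<in> pos t" using Suc.prems by auto
    then show "p \<in> pos r" using t by simp
  qed
  ultimately have "2 ^ k \<le> length (leaves l)" "2 ^ k \<le> length (leaves r)" using Suc.IH by blast+
  then show ?case using t by simp
qed

lemma HB: "(\<forall>p. length p \<le> k \<longrightarrow> p \<in> pos t) \<Longrightarrow> k < ht t \<Longrightarrow> 2 ^ k < length (leaves t)"
proof (induction k arbitrary: t)
  case 0
  then obtain l r where t: "t = Nd l r" by (cases t) auto
  then show ?case using leaves_ne[of l] leaves_ne[of r] by (cases "leaves l"; cases "leaves r") auto
next
  case (Suc k)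
  have "[False] \<in> pos t" using Suc.prems by auto
  then obtain l r where t: "t = Nd l r" by (cases t) auto
  have al: "\<forall>p. length p \<le> k \<longrightarrow> p \<in> pos l"
  proof (intro allI impI)
    fix p :: "bool list" assume "length p \<le> k"
    then have "False # p \<in> pos t" using Suc.prems by auto
    then show "p \<in> pos l" using t by simp
  qed
  have ar: "\<forall>p. length p \<le> k \<longrightarrow> p \<in> pos r"
  proof (intro allI impI)
    fix p :: "bool list" assume "length p \<le> k"
    then have "True # p \<in> pos t" using Suc.prems by auto
    then show "p \<in> pos r" using t by simp
  qed
  have "k < ht l \<or> k < ht r" using Suc.prems(2) t by auto
  then show ?case
  proof
    assume "k < ht l"
    then have "2 ^ k < length (leaves l)" using Suc.IH al by blast
    moreover have "2 ^ k \<le> length (leaves r)" using HA ar by blast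
    ultimately show ?case using t by simp
  next
    assume "k < ht r"
    then have "2 ^ k < length (leaves r)" using Suc.IH ar by blast
    moreover have "2 ^ k \<le> length (leaves l)" using HA al by blast
    ultimately show ?case using t by simp
  qed
qed

lemma complete_ht: "complete t \<Longrightarrow> 0 < ht t \<Longrightarrow> 2 ^ (ht t - 1) < length (leaves t)"
proof -
  assume c: "complete t" and h0: "0 < ht t"
  obtain H where H1: "\<forall>p. length p < H \<longrightarrow> p \<in> pos t" and H2: "\<forall>p\<in>pos t. length p \<le> H"
    using c unfolding complete_def by blast
  obtain p where "p \<in> pos t" "length p = ht t" using ht_ex by blast
  then have "ht t \<le> H" using H2 by auto
  then have "\<forall>p. length p \<le> ht t - 1 \<longrightarrow> p \<in> pos t" using H1 h0 by auto
  then show ?thesis using HB h0 by simp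
qed

lemma leaves_sub_infix: "u \<in> pos t \<Longrightarrow> \<exists>ps ss. leaves t = ps @ leaves (sub t u) @ ss"
proof (induction t arbitrary: u)
  case (Lf x) then show ?case by (intro exI[of _ "[]"]) simp
next
  case (Nd l r)
  show ?case
  proof (cases u)
    case Nil then show ?thesis by (intro exI[of _ "[]"]) simp
  next
    case (Cons b q)
    show ?thesis
    proof (cases b)
      case True
      then have "q \<in> pos r" using Nd.prems Cons by simp
      then obtain ps ss where "leaves r = ps @ leaves (sub r q) @ ss" using Nd.IH(2) by blast
      then have "leaves (Nd l r) = (leaves l @ ps) @ leaves (sub (Nd l r) u) @ ss" using Cons True by simp
      then show ?thesis by blast
    next
      case False
      then have "q \<in> pos l" using Nd.prems Cons by simp
      then obtain ps ss where "leaves l = ps @ leaves (sub l q) @ ss" using Nd.IH(1) by blast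
      then have "leaves (Nd l r) = ps @ leaves (sub (Nd l r) u) @ (ss @ leaves r)" using Cons False by simp
      then show ?thesis by blast
    qed
  qed
qed

lemma infix_upt: "[a..<b] = ps @ xs @ ss \<Longrightarrow> \<exists>i j. set xs = {i..<j}"
proof -
  assume h: "[a..<b] = ps @ xs @ ss"
  show ?thesis
  proof (cases "xs = []")
    case True then show ?thesis by (intro exI[of _ 0]) simp
  next
    case False
  have "drop (length ps) [a..<b] = xs @ ss" using h by simp
  then have d: "[a + length ps..<b] = xs @ ss" by simp
  have len: "b - (a + length ps) = length xs + length ss" using arg_cong[OF d, of length] by simp
  have "xs = take (length xs) [a + length ps..<b]" using d by simp
  also have "\<dots> = [a + length ps..<a + length ps + length xs]" using len False by (intro take_upt) (cases xs; simp)
  finally show ?thesis by (metis set_upt)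
  qed
qed

lemma L_interval: "leaves t = [a..<b] \<Longrightarrow> u \<in> pos t \<Longrightarrow> \<exists>i j. L t u = {i..<j}"
  using leaves_sub_infix infix_upt unfolding L_def by metis



definition cov :: "btree \<Rightarrow> bool list set \<Rightarrow> nat \<Rightarrow> nat \<Rightarrow> bool" where
  "cov t P a b \<longleftrightarrow> (\<exists>u v. P = {u, v} \<and> a \<in> L t u \<and> b \<in> L t v)"

lemma trans_split: "transversal t P \<Longrightarrow> P = {u, v} \<Longrightarrow>
   u \<noteq> v \<and> u \<in> pos t \<and> v \<in> pos t \<and> \<not> prefix u v \<and> \<not> prefix v u"
  unfolding transversal_def by (auto simp: doubleton_eq_iff)

lemma trans_disj: "distinct (leaves t) \<Longrightarrow> transversal t P \<Longrightarrow> P = {u, v} \<Longrightarrow> L t u \<inter> L t v = {}"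
  using trans_split G2 by metis

lemma orient: "distinct (leaves t) \<Longrightarrow> transversal t P \<Longrightarrow> P = {u, v} \<Longrightarrow> P = {u', v'} \<Longrightarrow>
  a \<in> L t u \<Longrightarrow> b \<in> L t v \<Longrightarrow> a \<in> L t u' \<Longrightarrow> b \<in> L t v' \<Longrightarrow> u = u' \<and> v = v'"
proof -
  assume d: "distinct (leaves t)" and tP: "transversal t P" and P1: "P = {u, v}" and P2: "P = {u', v'}"
    and a: "a \<in> L t u" "b \<in> L t v" "a \<in> L t u'" "b \<in> L t v'"
  have dj: "L t u \<inter> L t v = {}" using trans_disj[OF d tP P1] .
  have "(u = u' \<and> v = v') \<or> (u = v' \<and> v = u')" using P1 P2 by (auto simp: doubleton_eq_iff)
  then show ?thesis
  proof
    assume "u = v' \<and> v = u'"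
    then have "b \<in> L t u" using a by simp
    then show ?thesis using dj a by blast
  qed
qed

lemma ple_intro: "prefix u u' \<Longrightarrow> prefix v v' \<Longrightarrow> pair_le {u, v} {u', v'}"
  unfolding pair_le_def by blast

lemma ple_orient: "distinct (leaves t) \<Longrightarrow> transversal t P \<Longrightarrow> transversal t Q \<Longrightarrow>
  P = {u, v} \<Longrightarrow> Q = {u', v'} \<Longrightarrow> a \<in> L t u \<Longrightarrow> b \<in> L t v \<Longrightarrow> a \<in> L t u' \<Longrightarrow> b \<in> L t v' \<Longrightarrow>
  pair_le P Q \<Longrightarrow> prefix u u' \<and> prefix v v'"
proof -
  assume d: "distinct (leaves t)" and tP: "transversal t P" and tQ: "transversal t Q"
    and P: "P = {u, v}" and Q: "Q = {u', v'}"
    and a: "a \<in> L t u" "b \<in> L t v" "a \<in> L t u'" "b \<in> L t v'" and le: "pair_le P Q"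
  obtain p1 p2 q1 q2 where pq: "P = {p1, p2}" "Q = {q1, q2}" "prefix p1 q1" "prefix p2 q2"
    using le unfolding pair_le_def by blast
  have dP: "L t u \<inter> L t v = {}" using trans_disj[OF d tP P] .
  have dQ: "L t u' \<inter> L t v' = {}" using trans_disj[OF d tQ Q] .
  have c1: "(p1 = u \<and> p2 = v) \<or> (p1 = v \<and> p2 = u)" using P pq by (auto simp: doubleton_eq_iff)
  have c2: "(q1 = u' \<and> q2 = v') \<or> (q1 = v' \<and> q2 = u')" using Q pq by (auto simp: doubleton_eq_iff)
  have G: "L t y \<subseteq> L t x" if "prefix x y" for x y using G1[OF that] .
  show ?thesis
  proof (cases "p1 = u \<and> p2 = v")
    case True
    show ?thesis
    proof (cases "q1 = u' \<and> q2 = v'")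
      case True2: True
      then show ?thesis using True pq by simp
    next
      case False
      then have "q1 = v'" "q2 = u'" using c2 by auto
      then have "L t v' \<subseteq> L t u" using G[of u v'] pq True by simp
      then have "b \<in> L t u" using a by blast
      then show ?thesis using dP a by blast
    qed
  next
    case False
    then have p: "p1 = v" "p2 = u" using c1 by auto
    show ?thesis
    proof (cases "q1 = u' \<and> q2 = v'")
      case True2: True
      then have "L t u' \<subseteq> L t v" using G[of v u'] pq p by simp
      then have "a \<in> L t v" using a by blast
      then show ?thesis using dP a by blast
    next
      case False2: False
      then have "q1 = v'" "q2 = u'" using c2 by auto
      then show ?thesis using pq p by simp
    qed
  qed
qed

lemma chain: "distinct (leaves t) \<Longrightarrow> P = {u, v} \<Longrightarrow> Q = {u', v'} \<Longrightarrow>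
  u \<in> pos t \<Longrightarrow> v \<in> pos t \<Longrightarrow> u' \<in> pos t \<Longrightarrow> v' \<in> pos t \<Longrightarrow>
  \<not> cross P Q \<Longrightarrow> \<not> cross Q P \<Longrightarrow>
  a \<in> L t u \<Longrightarrow> b \<in> L t v \<Longrightarrow> a \<in> L t u' \<Longrightarrow> b \<in> L t v' \<Longrightarrow>
  (prefix u u' \<and> prefix v v') \<or> (prefix u' u \<and> prefix v' v)"
proof -
  assume d: "distinct (leaves t)" and P: "P = {u, v}" and Q: "Q = {u', v'}"
    and pos: "u \<in> pos t" "v \<in> pos t" "u' \<in> pos t" "v' \<in> pos t"
    and nc: "\<not> cross P Q" "\<not> cross Q P"
    and a: "a \<in> L t u" "b \<in> L t v" "a \<in> L t u'" "b \<in> L t v'"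
  have cu: "prefix u u' \<or> prefix u' u" using G5[OF d pos(1) pos(3) a(1) a(3)] .
  have cv: "prefix v v' \<or> prefix v' v" using G5[OF d pos(2) pos(4) a(2) a(4)] .
  show ?thesis
  proof (rule ccontr)
    assume n: "\<not> ?thesis"
    show False
    proof (cases "prefix u u'")
      case True
      then have "\<not> prefix v v'" using n by blast
      then have "prefix v' v" "v' \<noteq> v" using cv by auto
      moreover have "u \<noteq> u'" using n True \<open>prefix v' v\<close> by auto
      ultimately have "strict_prefix u u'" "strict_prefix v' v" using True by (auto simp: strict_prefix_def)
      then have "cross P Q" unfolding cross_def using P Q by blast
      then show False using nc by blast
    next
      case False
      then have pu: "prefix u' u" "u' \<noteq> u" using cu by auto
      then have "\<not> prefix v' v" using n by blast
      then have "prefix v v'" "v \<noteq> v'" using cv by auto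
      then have "strict_prefix u' u" "strict_prefix v v'" using pu by (auto simp: strict_prefix_def)
      then have "cross Q P" unfolding cross_def using P Q by blast
      then show False using nc by blast
    qed
  qed
qed



lemma prefix_len_eq: "prefix u u' \<Longrightarrow> length u' \<le> length u \<Longrightarrow> u = u'"
  by (metis prefix_length_le prefix_order.eq_iff prefix_length_prefix prefix_order.refl)

lemma ple_antisym: "distinct (leaves t) \<Longrightarrow> transversal t P \<Longrightarrow> transversal t Q \<Longrightarrow>
  cov t P a b \<Longrightarrow> cov t Q a b \<Longrightarrow> pair_le P Q \<Longrightarrow> pair_le Q P \<Longrightarrow> P = Q"
proof -
  assume d: "distinct (leaves t)" and tP: "transversal t P" and tQ: "transversal t Q"
    and cP: "cov t P a b" and cQ: "cov t Q a b" and le1: "pair_le P Q" and le2: "pair_le Q P"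
  obtain u v where P: "P = {u, v}" "a \<in> L t u" "b \<in> L t v" using cP unfolding cov_def by blast
  obtain u' v' where Q: "Q = {u', v'}" "a \<in> L t u'" "b \<in> L t v'" using cQ unfolding cov_def by blast
  have "prefix u u' \<and> prefix v v'" using ple_orient[OF d tP tQ P(1) Q(1) P(2,3) Q(2,3) le1] .
  moreover have "prefix u' u \<and> prefix v' v" using ple_orient[OF d tQ tP Q(1) P(1) Q(2,3) P(2,3) le2] .
  ultimately show ?thesis using P Q by auto
qed

lemma max_ex: assumes d: "distinct (leaves t)" and fin: "finite C" and ne: "C \<noteq> {}"
  and tr: "\<And>P. P \<in> C \<Longrightarrow> transversal t P \<and> cov t P a b"
  and nc: "\<And>P Q. P \<in> C \<Longrightarrow> Q \<in> C \<Longrightarrow> \<not> cross P Q"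
  shows "\<exists>M\<in>C. \<forall>Q\<in>C. pair_le Q M"
proof -
  define wt :: "bool list set \<Rightarrow> nat" where "wt P = sum length P" for P
  obtain M where M: "M \<in> C" "\<And>Q. Q \<in> C \<Longrightarrow> wt Q \<le> wt M"
  proof -
    have "Max (wt ` C) \<in> wt ` C" using fin ne by simp
    then obtain M where "M \<in> C" "wt M = Max (wt ` C)" by auto
    moreover have "\<And>Q. Q \<in> C \<Longrightarrow> wt Q \<le> Max (wt ` C)" using fin by simp
    ultimately show ?thesis using that by metis
  qed
  have "pair_le Q M" if Q: "Q \<in> C" for Q
  proof -
    obtain u v where Mu: "M = {u, v}" "a \<in> L t u" "b \<in> L t v" using tr[OF M(1)] unfolding cov_def by blast
    obtain u' v' where Qu: "Q = {u', v'}" "a \<in> L t u'" "b \<in> L t v'" using tr[OF Q] unfolding cov_def by blast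
    have sM: "u \<noteq> v \<and> u \<in> pos t \<and> v \<in> pos t" using trans_split tr[OF M(1)] Mu(1) by blast
    have sQ: "u' \<noteq> v' \<and> u' \<in> pos t \<and> v' \<in> pos t" using trans_split tr[OF Q] Qu(1) by blast
    have "(prefix u u' \<and> prefix v v') \<or> (prefix u' u \<and> prefix v' v)"
      using chain[OF d Mu(1) Qu(1)] sM sQ nc[OF M(1) Q] nc[OF Q M(1)] Mu Qu by blast
    then show ?thesis
    proof
      assume pp: "prefix u u' \<and> prefix v v'"
      have "wt Q \<le> wt M" using M(2)[OF Q] .
      then have "length u' + length v' \<le> length u + length v" using Mu(1) Qu(1) sM sQ by (simp add: wt_def)
      moreover have "length u \<le> length u'" "length v \<le> length v'" using pp by (auto intro: prefix_length_le)
      ultimately have "length u' \<le> length u" "length v' \<le> length v" by auto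
      then have "u = u'" "v = v'" using pp prefix_len_eq by blast+
      then show ?thesis using Mu Qu by (simp add: ple_intro)
    next
      assume "prefix u' u \<and> prefix v' v"
      then show ?thesis using Mu Qu ple_intro by blast
    qed
  qed
  then show ?thesis using M(1) by blast
qed

lemma ple_leaf: assumes d: "distinct (leaves t)" and tP: "transversal t P"
  and w1: "is_leaf_pos t w1" and w2: "is_leaf_pos t w2" and ne: "w1 \<noteq> w2"
  shows "pair_le P {w1, w2} \<longleftrightarrow> cov t P (lbl t w1) (lbl t w2)"
proof
  assume "pair_le P {w1, w2}"
  then obtain u v u' v' where h: "P = {u, v}" "{w1, w2} = {u', v'}" "prefix u u'" "prefix v v'"
    unfolding pair_le_def by blast
  have s: "u \<in> pos t" "v \<in> pos t" using trans_split[OF tP h(1)] by auto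
  have "(u' = w1 \<and> v' = w2) \<or> (u' = w2 \<and> v' = w1)" using h(2) by (auto simp: doubleton_eq_iff)
  then show "cov t P (lbl t w1) (lbl t w2)"
  proof
    assume e: "u' = w1 \<and> v' = w2"
    have "lbl t w1 \<in> L t u" using in_L_iff[OF d w1 s(1)] h(3) e by simp
    moreover have "lbl t w2 \<in> L t v" using in_L_iff[OF d w2 s(2)] h(4) e by simp
    ultimately show ?thesis using h(1) unfolding cov_def by blast
  next
    assume e: "u' = w2 \<and> v' = w1"
    have "lbl t w2 \<in> L t u" using in_L_iff[OF d w2 s(1)] h(3) e by simp
    moreover have "lbl t w1 \<in> L t v" using in_L_iff[OF d w1 s(2)] h(4) e by simp
    moreover have "P = {v, u}" using h(1) by auto
    ultimately show ?thesis unfolding cov_def by blast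
  qed
next
  assume "cov t P (lbl t w1) (lbl t w2)"
  then obtain u v where h: "P = {u, v}" "lbl t w1 \<in> L t u" "lbl t w2 \<in> L t v" unfolding cov_def by blast
  have s: "u \<in> pos t" "v \<in> pos t" using trans_split[OF tP h(1)] by auto
  have "prefix u w1" "prefix v w2" using in_L_iff[OF d w1 s(1)] in_L_iff[OF d w2 s(2)] h by auto
  then show "pair_le P {w1, w2}" using h(1) ple_intro by blast
qed

lemma sem: assumes d: "distinct (leaves t)" and stm: "signed_tree_model t A B" and fin: "finite (A \<union> B)"
  and w1: "is_leaf_pos t w1" and w2: "is_leaf_pos t w2" and ne: "w1 \<noteq> w2"
  shows "model_adj A B w1 w2 \<longleftrightarrow>
    (\<exists>P\<in>B. cov t P (lbl t w1) (lbl t w2) \<and> (\<forall>Q\<in>A \<union> B. cov t Q (lbl t w1) (lbl t w2) \<longrightarrow> pair_le Q P))"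
    (is "?L \<longleftrightarrow> ?R")
proof
  have dj: "A \<inter> B = {}" and tr: "\<And>P. P \<in> A \<union> B \<Longrightarrow> transversal t P"
    and nc: "\<And>P Q. P \<in> A \<union> B \<Longrightarrow> Q \<in> A \<union> B \<Longrightarrow> \<not> cross P Q"
    using stm unfolding signed_tree_model_def by blast+
  let ?a = "lbl t w1" and ?b = "lbl t w2"
  {
    assume ?L
    then obtain P where P: "P \<in> B" "pair_le P {w1, w2}"
      and no: "\<not> (\<exists>Q\<in>A. pair_lt P Q \<and> pair_le Q {w1, w2})"
      unfolding model_adj_def by blast
    have cP: "cov t P ?a ?b" using ple_leaf[OF d tr w1 w2 ne] P by blast
    define C where "C = {Q \<in> A \<union> B. cov t Q ?a ?b}"
    have "finite C" using fin unfolding C_def by simp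
    moreover have "C \<noteq> {}" using P cP unfolding C_def by blast
    ultimately obtain M where M: "M \<in> C" "\<forall>Q\<in>C. pair_le Q M"
      using max_ex[OF d, of C ?a ?b] tr nc unfolding C_def by blast
    have MAB: "M \<in> A \<union> B" "cov t M ?a ?b" using M(1) unfolding C_def by auto
    have PM: "pair_le P M" using M(2) P(1) cP unfolding C_def by blast
    have "M \<notin> A"
    proof
      assume MA: "M \<in> A"
      then have "M \<noteq> P" using P(1) dj by blast
      then have "pair_lt P M" using PM unfolding pair_lt_def by blast
      moreover have "pair_le M {w1, w2}" using ple_leaf[OF d tr w1 w2 ne] MAB by blast
      ultimately show False using no MA by blast
    qed
    then have "M \<in> B" using MAB by blast
    then show ?R using M MAB unfolding C_def by blast
  }
  {
    assume ?R
    then obtain P where P: "P \<in> B" "cov t P ?a ?b" and mx: "\<forall>Q\<in>A \<union> B. cov t Q ?a ?b \<longrightarrow> pair_le Q P"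
      by blast
    have "pair_le P {w1, w2}" using ple_leaf[OF d tr w1 w2 ne] P by blast
    moreover have "\<not> (\<exists>Q\<in>A. pair_lt P Q \<and> pair_le Q {w1, w2})"
    proof
      assume "\<exists>Q\<in>A. pair_lt P Q \<and> pair_le Q {w1, w2}"
      then obtain Q where Q: "Q \<in> A" "pair_lt P Q" "pair_le Q {w1, w2}" by blast
      have cQ: "cov t Q ?a ?b" using ple_leaf[OF d tr w1 w2 ne] Q by blast
      have "pair_le Q P" using mx Q(1) cQ by blast
      moreover have "pair_le P Q" "P \<noteq> Q" using Q(2) unfolding pair_lt_def by auto
      ultimately show False using ple_antisym[OF d tr tr P(2) cQ] P(1) Q(1) by blast
    qed
    ultimately show ?L using P(1) unfolding model_adj_def by blast
  }
qed



locale ctxT =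
  fixes T R :: btree and A B :: "bool list set set" and n :: nat
  assumes lT: "leaves T = [1..<n+1]" and lR: "leaves R = [1..<n+1]"
    and stm: "signed_tree_model T A B"
begin

lemma dT: "distinct (leaves T)" using lT by simp
lemma dR: "distinct (leaves R)" using lR by simp

lemma trAB: "P \<in> A \<union> B \<Longrightarrow> transversal T P"
  using stm unfolding signed_tree_model_def by blast

lemma ncAB: "P \<in> A \<union> B \<Longrightarrow> Q \<in> A \<union> B \<Longrightarrow> \<not> cross P Q"
  using stm unfolding signed_tree_model_def by blast

lemma djAB: "A \<inter> B = {}"
  using stm unfolding signed_tree_model_def by blast

lemma LT_sub: "L T u \<subseteq> set (leaves R)"
  using leaves_sub_subset[of T u] lT lR unfolding L_def by simp

definition F :: "bool list set \<Rightarrow> bool list set set" where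
  "F P = {{x, y} | x y. \<exists>u v. P = {u, v} \<and> x \<in> can (L T u) R \<and> y \<in> can (L T v) R}"

definition AR :: "bool list set set" where
  "AR = {X. \<exists>P\<in>A. X \<in> F P \<and> (\<forall>Q\<in>A \<union> B. X \<in> F Q \<longrightarrow> pair_le Q P)}"

definition BR :: "bool list set set" where
  "BR = {X. \<exists>P\<in>B. X \<in> F P \<and> (\<forall>Q\<in>A \<union> B. X \<in> F Q \<longrightarrow> pair_le Q P)}"

lemma F_any: "X \<in> F P \<Longrightarrow> X = {c, e} \<Longrightarrow> \<exists>u v. P = {u, v} \<and> c \<in> can (L T u) R \<and> e \<in> can (L T v) R"
proof -
  assume X: "X \<in> F P" and ce: "X = {c, e}"
  obtain x y u v where h: "X = {x, y}" "P = {u, v}" "x \<in> can (L T u) R" "y \<in> can (L T v) R"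
    using X unfolding F_def by blast
  have "(c = x \<and> e = y) \<or> (c = y \<and> e = x)" using h(1) ce by (auto simp: doubleton_eq_iff)
  then show ?thesis
  proof
    assume "c = x \<and> e = y" then show ?thesis using h by blast
  next
    assume "c = y \<and> e = x"
    moreover have "P = {v, u}" using h(2) by auto
    ultimately show ?thesis using h by blast
  qed
qed

lemma F_orient: "X \<in> F P \<Longrightarrow> cov R X a b \<Longrightarrow>
  \<exists>u v x y. P = {u, v} \<and> X = {x, y} \<and> x \<in> can (L T u) R \<and> y \<in> can (L T v) R \<and> a \<in> L R x \<and> b \<in> L R y"
proof -
  assume X: "X \<in> F P" and c: "cov R X a b"
  obtain x y where xy: "X = {x, y}" "a \<in> L R x" "b \<in> L R y" using c unfolding cov_def by blast
  obtain u v where "P = {u, v}" "x \<in> can (L T u) R" "y \<in> can (L T v) R" using F_any[OF X xy(1)] by blast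
  then show ?thesis using xy by blast
qed

lemma F1: "X \<in> F P \<Longrightarrow> cov R X a b \<Longrightarrow> cov T P a b"
proof -
  assume X: "X \<in> F P" and c: "cov R X a b"
  obtain u v x y where h: "P = {u, v}" "X = {x, y}" "x \<in> can (L T u) R" "y \<in> can (L T v) R"
    "a \<in> L R x" "b \<in> L R y" using F_orient[OF X c] by blast
  have "a \<in> L T u" "b \<in> L T v" using C1[OF h(3)] C1[OF h(4)] h(5,6) by auto
  then show ?thesis using h(1) unfolding cov_def by blast
qed

lemma F2: "P \<in> A \<union> B \<Longrightarrow> cov T P a b \<Longrightarrow> \<exists>X\<in>F P. cov R X a b"
proof -
  assume P: "P \<in> A \<union> B" and c: "cov T P a b"
  obtain u v where h: "P = {u, v}" "a \<in> L T u" "b \<in> L T v" using c unfolding cov_def by blast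
  obtain x where x: "x \<in> can (L T u) R" "a \<in> L R x" using C2[OF h(2)] LT_sub h(2) by blast
  obtain y where y: "y \<in> can (L T v) R" "b \<in> L R y" using C2[OF h(3)] LT_sub h(3) by blast
  have "{x, y} \<in> F P" unfolding F_def using h(1) x(1) y(1) by blast
  moreover have "cov R {x, y} a b" unfolding cov_def using x y by blast
  ultimately show ?thesis by blast
qed

lemma X_trans: "P \<in> A \<union> B \<Longrightarrow> X \<in> F P \<Longrightarrow> transversal R X"
proof -
  assume P: "P \<in> A \<union> B" and X: "X \<in> F P"
  obtain x y u v where h: "X = {x, y}" "P = {u, v}" "x \<in> can (L T u) R" "y \<in> can (L T v) R"
    using X unfolding F_def by blast
  have dj: "L T u \<inter> L T v = {}" using trans_disj[OF dT trAB[OF P] h(2)] .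
  have cx: "x \<in> pos R" "L R x \<subseteq> L T u" using C1[OF h(3)] by auto
  have cy: "y \<in> pos R" "L R y \<subseteq> L T v" using C1[OF h(4)] by auto
  have nx: "L R x \<noteq> {}" and ny: "L R y \<noteq> {}" using L_ne by auto
  have "x \<noteq> y" using cx cy nx dj by blast
  moreover have "\<not> prefix x y"
  proof
    assume "prefix x y"
    then have "L R y \<subseteq> L R x" using G1 by blast
    then show False using cx cy ny dj by blast
  qed
  moreover have "\<not> prefix y x"
  proof
    assume "prefix y x"
    then have "L R x \<subseteq> L R y" using G1 by blast
    then show False using cx cy nx dj by blast
  qed
  ultimately show ?thesis unfolding transversal_def using h(1) cx(1) cy(1) by blast
qed

lemma mono: "P \<in> A \<union> B \<Longrightarrow> Q \<in> A \<union> B \<Longrightarrow> X \<in> F P \<Longrightarrow> Y \<in> F Q \<Longrightarrow> cov R X a b \<Longrightarrow> cov R Y a b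
  \<Longrightarrow> pair_le P Q \<Longrightarrow> pair_le X Y"
proof -
  assume P: "P \<in> A \<union> B" and Q: "Q \<in> A \<union> B" and X: "X \<in> F P" and Y: "Y \<in> F Q"
    and cX: "cov R X a b" and cY: "cov R Y a b" and le: "pair_le P Q"
  obtain u v x y where h: "P = {u, v}" "X = {x, y}" "x \<in> can (L T u) R" "y \<in> can (L T v) R"
    "a \<in> L R x" "b \<in> L R y" using F_orient[OF X cX] by blast
  obtain u' v' x' y' where h': "Q = {u', v'}" "Y = {x', y'}" "x' \<in> can (L T u') R" "y' \<in> can (L T v') R"
    "a \<in> L R x'" "b \<in> L R y'" using F_orient[OF Y cY] by blast
  have ab: "a \<in> L T u" "b \<in> L T v" "a \<in> L T u'" "b \<in> L T v'"
    using C1[OF h(3)] C1[OF h(4)] C1[OF h'(3)] C1[OF h'(4)] h(5,6) h'(5,6) by auto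
  have pp: "prefix u u' \<and> prefix v v'"
    using ple_orient[OF dT trAB[OF P] trAB[OF Q] h(1) h'(1) ab le] .
  have sub1: "L T u' \<subseteq> L T u" "L T v' \<subseteq> L T v" using pp G1 by blast+
  have gen: "prefix z z'" if z: "z \<in> can (L T s) R" and z': "z' \<in> can (L T s') R"
    and c: "c \<in> L R z" "c \<in> L R z'" and ss: "L T s' \<subseteq> L T s" for z z' s s' c
  proof -
    have zp: "z \<in> pos R" "z' \<in> pos R" using C1[OF z] C1[OF z'] by auto
    have "prefix z z' \<or> prefix z' z" using G5[OF dR zp c] .
    moreover have False if "prefix z' z" "z' \<noteq> z"
    proof -
      have "strict_prefix z' z" using that by (simp add: strict_prefix_def)
      then have "\<not> L R z' \<subseteq> L T s" using C3[OF z] by blast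
      moreover have "L R z' \<subseteq> L T s'" using C1[OF z'] by blast
      ultimately show False using ss by blast
    qed
    ultimately show ?thesis by blast
  qed
  have "prefix x x'" using gen[OF h(3) h'(3) h(5) h'(5) sub1(1)] .
  moreover have "prefix y y'" using gen[OF h(4) h'(4) h(6) h'(6) sub1(2)] .
  ultimately show ?thesis using h(2) h'(2) ple_intro by blast
qed

lemma noncross: "P \<in> A \<union> B \<Longrightarrow> Q \<in> A \<union> B \<Longrightarrow> X \<in> F P \<Longrightarrow> Y \<in> F Q \<Longrightarrow> \<not> cross X Y"
proof
  assume P: "P \<in> A \<union> B" and Q: "Q \<in> A \<union> B" and X: "X \<in> F P" and Y: "Y \<in> F Q" and cr: "cross X Y"
  obtain c e c' e' where h: "X = {c, e}" "Y = {c', e'}" "strict_prefix c c'" "strict_prefix e' e"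
    using cr unfolding cross_def by blast
  obtain u1 v1 where p1: "P = {u1, v1}" "c \<in> can (L T u1) R" "e \<in> can (L T v1) R" using F_any[OF X h(1)] by blast
  obtain u2 v2 where p2: "Q = {u2, v2}" "c' \<in> can (L T u2) R" "e' \<in> can (L T v2) R" using F_any[OF Y h(2)] by blast
  have pos1: "u1 \<in> pos T" "v1 \<in> pos T" using trans_split[OF trAB[OF P] p1(1)] by auto
  have pos2: "u2 \<in> pos T" "v2 \<in> pos T" using trans_split[OF trAB[OF Q] p2(1)] by auto
  have Lc: "L R c' \<subseteq> L R c" "L R e \<subseteq> L R e'" using h(3,4) G1 by (auto simp: strict_prefix_def)
  obtain z where z: "z \<in> L R c'" using L_ne by blast
  have zu: "z \<in> L T u1" "z \<in> L T u2" using z Lc C1[OF p1(2)] C1[OF p2(2)] by auto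
  have "prefix u1 u2 \<or> prefix u2 u1" using G5[OF dT pos1(1) pos2(1) zu] .
  moreover have "\<not> prefix u2 u1"
  proof
    assume "prefix u2 u1"
    then have "L T u1 \<subseteq> L T u2" using G1 by blast
    then have "L R c \<subseteq> L T u2" using C1[OF p1(2)] by blast
    then show False using C3[OF p2(2) h(3)] by blast
  qed
  ultimately have s1: "strict_prefix u1 u2" by (auto simp: strict_prefix_def)
  obtain z' where z': "z' \<in> L R e" using L_ne by blast
  have zv: "z' \<in> L T v1" "z' \<in> L T v2" using z' Lc C1[OF p1(3)] C1[OF p2(3)] by auto
  have "prefix v1 v2 \<or> prefix v2 v1" using G5[OF dT pos1(2) pos2(2) zv] .
  moreover have "\<not> prefix v1 v2"
  proof
    assume "prefix v1 v2"
    then have "L T v2 \<subseteq> L T v1" using G1 by blast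
    then have "L R e' \<subseteq> L T v1" using C1[OF p2(3)] by blast
    then show False using C3[OF p1(3) h(4)] by blast
  qed
  ultimately have s2: "strict_prefix v2 v1" by (auto simp: strict_prefix_def)
  have "cross P Q" unfolding cross_def using p1(1) p2(1) s1 s2 by blast
  then show False using ncAB[OF P Q] by blast
qed

lemma finAB: "finite (A \<union> B)"
proof -
  have "A \<union> B \<subseteq> Pow (pos T)" using trAB unfolding transversal_def by blast
  then show ?thesis using finite_pos finite_subset by blast
qed

lemma gen_max: "Q \<in> A \<union> B \<Longrightarrow> Y \<in> F Q \<Longrightarrow> Y \<in> AR \<union> BR"
proof -
  assume Q: "Q \<in> A \<union> B" and Y: "Y \<in> F Q"
  obtain x y u v where h: "Y = {x, y}" "Q = {u, v}" "x \<in> can (L T u) R" "y \<in> can (L T v) R"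
    using Y unfolding F_def by blast
  obtain a where a: "a \<in> L R x" using L_ne by blast
  obtain b where b: "b \<in> L R y" using L_ne by blast
  have cY: "cov R Y a b" unfolding cov_def using h(1) a b by blast
  define C where "C = {Q' \<in> A \<union> B. Y \<in> F Q'}"
  have "finite C" using finAB unfolding C_def by simp
  moreover have "C \<noteq> {}" using Q Y unfolding C_def by blast
  moreover have "\<And>P. P \<in> C \<Longrightarrow> transversal T P \<and> cov T P a b" using trAB F1 cY unfolding C_def by blast
  moreover have "\<And>P Q. P \<in> C \<Longrightarrow> Q \<in> C \<Longrightarrow> \<not> cross P Q" using ncAB unfolding C_def by blast
  ultimately obtain M where M: "M \<in> C" "\<forall>Q\<in>C. pair_le Q M" using max_ex[OF dT] by blast
  have "M \<in> A \<union> B" "Y \<in> F M" using M(1) unfolding C_def by auto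
  moreover have "\<forall>Q\<in>A \<union> B. Y \<in> F Q \<longrightarrow> pair_le Q M" using M(2) unfolding C_def by blast
  ultimately show ?thesis unfolding AR_def BR_def by blast
qed

lemma ARBR_sub: "AR \<union> BR \<subseteq> (\<Union>P\<in>A \<union> B. F P)"
  unfolding AR_def BR_def by blast

lemma ARBR_disj: "AR \<inter> BR = {}"
proof (rule ccontr)
  assume "AR \<inter> BR \<noteq> {}"
  then obtain X where "X \<in> AR" "X \<in> BR" by blast
  then obtain P P' where P: "P \<in> A" "X \<in> F P" "\<forall>Q\<in>A \<union> B. X \<in> F Q \<longrightarrow> pair_le Q P"
    and P': "P' \<in> B" "X \<in> F P'" "\<forall>Q\<in>A \<union> B. X \<in> F Q \<longrightarrow> pair_le Q P'"
    unfolding AR_def BR_def by blast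
  obtain x y u v where h: "X = {x, y}" "P = {u, v}" "x \<in> can (L T u) R" "y \<in> can (L T v) R"
    using P(2) unfolding F_def by blast
  obtain a where a: "a \<in> L R x" using L_ne by blast
  obtain b where b: "b \<in> L R y" using L_ne by blast
  have cX: "cov R X a b" unfolding cov_def using h(1) a b by blast
  have "pair_le P P'" "pair_le P' P" using P P' by blast+
  then have "P = P'" using ple_antisym[OF dT trAB trAB F1[OF P(2) cX] F1[OF P'(2) cX]] P(1) P'(1) by blast
  then show False using P(1) P'(1) djAB by blast
qed

lemma stmR: "signed_tree_model R AR BR"
  unfolding signed_tree_model_def
proof (intro conjI ballI)
  show "AR \<inter> BR = {}" by (rule ARBR_disj)
next
  fix X assume "X \<in> AR \<union> BR"
  then obtain P where "P \<in> A \<union> B" "X \<in> F P" using ARBR_sub by blast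
  then show "transversal R X" using X_trans by blast
next
  fix X Y assume "X \<in> AR \<union> BR" "Y \<in> AR \<union> BR"
  then obtain P Q where "P \<in> A \<union> B" "X \<in> F P" "Q \<in> A \<union> B" "Y \<in> F Q" using ARBR_sub by blast
  then show "\<not> cross X Y" using noncross by blast
qed

lemma finR: "finite (AR \<union> BR)"
proof -
  have "X \<subseteq> pos R" if X: "X \<in> AR \<union> BR" for X
  proof -
    have "transversal R X" using stmR X unfolding signed_tree_model_def by blast
    then obtain u v where "X = {u, v}" "u \<in> pos R" "v \<in> pos R" unfolding transversal_def by blast
    then show ?thesis by simp
  qed
  then have "AR \<union> BR \<subseteq> Pow (pos R)" by blast
  then show ?thesis using finite_pos finite_subset by blast
qed

lemma semTR:
  "(\<exists>P\<in>B. cov T P a b \<and> (\<forall>Q\<in>A \<union> B. cov T Q a b \<longrightarrow> pair_le Q P)) \<longleftrightarrow>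
   (\<exists>X\<in>BR. cov R X a b \<and> (\<forall>Y\<in>AR \<union> BR. cov R Y a b \<longrightarrow> pair_le Y X))"
proof
  assume "\<exists>P\<in>B. cov T P a b \<and> (\<forall>Q\<in>A \<union> B. cov T Q a b \<longrightarrow> pair_le Q P)"
  then obtain P where P: "P \<in> B" "cov T P a b" "\<forall>Q\<in>A \<union> B. cov T Q a b \<longrightarrow> pair_le Q P" by blast
  obtain X where X: "X \<in> F P" "cov R X a b" using F2[of P] P by blast
  have "X \<in> BR" unfolding BR_def using P X F1 by blast
  moreover have "\<forall>Y\<in>AR \<union> BR. cov R Y a b \<longrightarrow> pair_le Y X"
  proof (intro ballI impI)
    fix Y assume Y: "Y \<in> AR \<union> BR" "cov R Y a b"
    then obtain Q where Q: "Q \<in> A \<union> B" "Y \<in> F Q" using ARBR_sub by blast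
    have "pair_le Q P" using P(3) Q F1 Y(2) by blast
    then show "pair_le Y X" using mono[OF Q(1) _ Q(2) X(1) Y(2) X(2)] P(1) by blast
  qed
  ultimately show "\<exists>X\<in>BR. cov R X a b \<and> (\<forall>Y\<in>AR \<union> BR. cov R Y a b \<longrightarrow> pair_le Y X)" using X by blast
next
  assume "\<exists>X\<in>BR. cov R X a b \<and> (\<forall>Y\<in>AR \<union> BR. cov R Y a b \<longrightarrow> pair_le Y X)"
  then obtain X where X: "X \<in> BR" "cov R X a b" "\<forall>Y\<in>AR \<union> BR. cov R Y a b \<longrightarrow> pair_le Y X" by blast
  then obtain P where P: "P \<in> B" "X \<in> F P" "\<forall>Q\<in>A \<union> B. X \<in> F Q \<longrightarrow> pair_le Q P"
    unfolding BR_def by blast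
  have cP: "cov T P a b" using F1[OF P(2) X(2)] .
  have "\<forall>Q\<in>A \<union> B. cov T Q a b \<longrightarrow> pair_le Q P"
  proof (intro ballI impI)
    fix Q assume Q: "Q \<in> A \<union> B" "cov T Q a b"
    obtain u v where Pu: "P = {u, v}" "a \<in> L T u" "b \<in> L T v" using cP unfolding cov_def by blast
    obtain u' v' where Qu: "Q = {u', v'}" "a \<in> L T u'" "b \<in> L T v'" using Q(2) unfolding cov_def by blast
    have sP: "u \<in> pos T" "v \<in> pos T" using trans_split[OF trAB Pu(1)] P(1) by auto
    have sQ: "u' \<in> pos T" "v' \<in> pos T" using trans_split[OF trAB[OF Q(1)] Qu(1)] by auto
    have "(prefix u u' \<and> prefix v v') \<or> (prefix u' u \<and> prefix v' v)"
      using chain[OF dT Pu(1) Qu(1) sP sQ ncAB ncAB Pu(2,3) Qu(2,3)] P(1) Q(1) by blast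
    then show "pair_le Q P"
    proof
      assume pp: "prefix u u' \<and> prefix v v'"
      then have PQ: "pair_le P Q" using Pu Qu ple_intro by blast
      obtain Y where Y: "Y \<in> F Q" "cov R Y a b" using F2[OF Q] by blast
      have YR: "Y \<in> AR \<union> BR" using gen_max[OF Q(1) Y(1)] .
      then have "pair_le Y X" using X(3) Y(2) by blast
      moreover have "pair_le X Y" using mono[OF _ Q(1) P(2) Y(1) X(2) Y(2) PQ] P(1) by blast
      moreover have "transversal R X" using X_trans P(1,2) by blast
      moreover have "transversal R Y" using X_trans Q(1) Y(1) by blast
      ultimately have "X = Y" using ple_antisym[OF dR _ _ X(2) Y(2)] by blast
      then show "pair_le Q P" using P(3) Q(1) Y(1) by blast
    next
      assume "prefix u' u \<and> prefix v' v"
      then show "pair_le Q P" using Pu Qu ple_intro by blast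
    qed
  qed
  then show "\<exists>P\<in>B. cov T P a b \<and> (\<forall>Q\<in>A \<union> B. cov T Q a b \<longrightarrow> pair_le Q P)" using P(1) cP by blast
qed

end



context ctxT
begin

lemma adjR: "models_graph T A B E \<Longrightarrow> models_graph R AR BR E"
  unfolding models_graph_def
proof (intro conjI allI impI)
  assume mT: "signed_tree_model T A B \<and> (\<forall>u v. is_leaf_pos T u \<longrightarrow> is_leaf_pos T v \<longrightarrow> u \<noteq> v \<longrightarrow>
        E (lbl T u) (lbl T v) = model_adj A B u v)"
  show "signed_tree_model R AR BR" by (rule stmR)
  fix r1 r2 assume r1: "is_leaf_pos R r1" and r2: "is_leaf_pos R r2" and ne: "r1 \<noteq> r2"
  define a1 where "a1 = lbl R r1"
  define a2 where "a2 = lbl R r2"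
  have sl: "set (leaves R) = set (leaves T)" using lT lR by simp
  obtain t1 where t1: "is_leaf_pos T t1" "lbl T t1 = a1" using leaf_exists lbl_in[OF r1] sl a1_def by metis
  obtain t2 where t2: "is_leaf_pos T t2" "lbl T t2 = a2" using leaf_exists lbl_in[OF r2] sl a2_def by metis
  have "a1 \<noteq> a2" using leaf_inj[OF dR r1 r2] ne a1_def a2_def by blast
  then have tne: "t1 \<noteq> t2" using t1 t2 by blast
  have "E a1 a2 = model_adj A B t1 t2" using mT t1 t2 tne by metis
  also have "\<dots> = (\<exists>P\<in>B. cov T P a1 a2 \<and> (\<forall>Q\<in>A \<union> B. cov T Q a1 a2 \<longrightarrow> pair_le Q P))"
    using sem[OF dT stm finAB t1(1) t2(1) tne] t1(2) t2(2) by simp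
  also have "\<dots> = (\<exists>X\<in>BR. cov R X a1 a2 \<and> (\<forall>Y\<in>AR \<union> BR. cov R Y a1 a2 \<longrightarrow> pair_le Y X))"
    by (rule semTR)
  also have "\<dots> = model_adj AR BR r1 r2"
    using sem[OF dR stmR finR r1 r2 ne] a1_def a2_def by simp
  finally show "E (lbl R r1) (lbl R r2) = model_adj AR BR r1 r2" using a1_def a2_def by simp
qed

definition K :: nat where "K = max 1 (2 * ht R - 2)"

lemma can_card: "P \<in> A \<union> B \<Longrightarrow> P = {u, v} \<Longrightarrow> card (can (L T u) R) \<le> K"
proof -
  assume P: "P \<in> A \<union> B" and uv: "P = {u, v}"
  have s: "u \<in> pos T" "v \<in> pos T" using trans_split[OF trAB[OF P] uv] by auto
  obtain i j where ij: "L T u = {i..<j}" using L_interval[OF lT s(1)] by blast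
  have dj: "L T u \<inter> L T v = {}" using trans_disj[OF dT trAB[OF P] uv] .
  have "L T v \<subseteq> set (leaves T)" unfolding L_def by (rule leaves_sub_subset)
  also have "set (leaves T) = {1..<n+1}" unfolding lT by (rule set_upt)
  finally have "L T v \<subseteq> {1..<n+1}" .
  then have "\<not> {1..<n+1} \<subseteq> {i..<j}" using dj ij L_ne[of T v] by blast
  then show ?thesis using GEN[OF lR] ij unfolding K_def by simp
qed

lemma F_card: "P \<in> A \<union> B \<Longrightarrow> card (F P) \<le> K * K"
proof -
  assume P: "P \<in> A \<union> B"
  obtain u v where uv: "P = {u, v}" using trAB[OF P] unfolding transversal_def by blast
  have vu: "P = {v, u}" using uv by auto
  have sub: "F P \<subseteq> (\<lambda>(x, y). {x, y}) ` (can (L T u) R \<times> can (L T v) R)"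
  proof
    fix X assume X: "X \<in> F P"
    obtain x y where xy: "X = {x, y}" using X unfolding F_def by blast
    obtain u1 v1 where h: "P = {u1, v1}" "x \<in> can (L T u1) R" "y \<in> can (L T v1) R" using F_any[OF X xy] by blast
    have "(u1 = u \<and> v1 = v) \<or> (u1 = v \<and> v1 = u)" using h(1) uv by (auto simp: doubleton_eq_iff)
    then show "X \<in> (\<lambda>(x, y). {x, y}) ` (can (L T u) R \<times> can (L T v) R)"
    proof
      assume "u1 = u \<and> v1 = v"
      then show ?thesis using h xy by force
    next
      assume e: "u1 = v \<and> v1 = u"
      have "X = (\<lambda>(x, y). {x, y}) (y, x)" using xy by auto
      then show ?thesis using h e by force
    qed
  qed
  have "card (F P) \<le> card ((\<lambda>(x, y). {x, y}) ` (can (L T u) R \<times> can (L T v) R))"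
    using sub by (intro card_mono) (auto simp: finite_can)
  also have "\<dots> \<le> card (can (L T u) R \<times> can (L T v) R)" by (rule card_image_le) (auto simp: finite_can)
  also have "\<dots> = card (can (L T u) R) * card (can (L T v) R)" by (rule card_cartesian_product)
  also have "\<dots> \<le> K * K" using can_card[OF P uv] can_card[OF P vu] by (intro mult_mono) auto
  finally show ?thesis .
qed

lemma card_ARBR: "card (AR \<union> BR) \<le> card (A \<union> B) * (K * K)"
proof -
  have fin: "finite (\<Union>P\<in>A \<union> B. F P)"
  proof -
    have "(\<Union>P\<in>A \<union> B. F P) \<subseteq> Pow (pos R)"
    proof
      fix X assume "X \<in> (\<Union>P\<in>A \<union> B. F P)"
      then obtain P where "P \<in> A \<union> B" "X \<in> F P" by blast
      then have "transversal R X" using X_trans by blast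
      then obtain x y where "X = {x, y}" "x \<in> pos R" "y \<in> pos R" unfolding transversal_def by blast
      then show "X \<in> Pow (pos R)" by simp
    qed
    then show ?thesis using finite_pos finite_subset by blast
  qed
  have "card (AR \<union> BR) \<le> card (\<Union>P\<in>A \<union> B. F P)" using ARBR_sub fin by (rule card_mono[rotated])
  also have "\<dots> \<le> (\<Sum>P\<in>A \<union> B. card (F P))" using finAB by (rule card_UN_le)
  also have "\<dots> \<le> (\<Sum>P\<in>A \<union> B. K * K)" using F_card by (intro sum_mono) auto
  also have "\<dots> = card (A \<union> B) * (K * K)" by simp
  finally show ?thesis .
qed

end

lemma K_bound: assumes n2: "n \<ge> 2" and c: "complete R" and lR: "leaves R = [1..<n+1]"
  shows "real (max 1 (2 * ht R - 2)) * real (max 1 (2 * ht R - 2)) \<le> 4 * (log 2 n)^2"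
proof -
  have ln: "length (leaves R) = n" using lR by simp
  have "0 < ht R"
  proof (cases R)
    case (Lf x) then show ?thesis using ln n2 by simp
  qed simp
  then have hp: "2 ^ (ht R - 1) < n" using complete_ht[OF c] ln by simp
  have lg: "1 \<le> log 2 (real n)" using n2 by (simp add: le_log_iff)
  show ?thesis
  proof (cases "ht R \<le> 1")
    case True
    then have "max 1 (2 * ht R - 2) = 1" by simp
    moreover have "1 \<le> (log 2 n)^2" using lg by (rule one_le_power)
    then have "1 \<le> 4 * (log 2 n)^2" by simp
    ultimately show ?thesis by simp
  next
    case False
    then have e: "real (max 1 (2 * ht R - 2)) = 2 * real (ht R - 1)" by simp
    have "real (ht R - 1) < log 2 n"
      using hp n2 by (subst less_log_iff) (auto simp: powr_realpow)
    then have "real (ht R - 1) * real (ht R - 1) \<le> log 2 n * log 2 n"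
      by (intro mult_mono) auto
    then show ?thesis unfolding e by (simp add: power2_eq_square)
  qed
qed



theorem lemma4p5:
  fixes n :: nat and d :: real and T R :: btree
    and A B :: "bool list set set" and E :: "nat \<Rightarrow> nat \<Rightarrow> bool"
  assumes "n \<ge> 2"
    and "leaves T = [1..<n+1]"
    and "models_graph T A B E"
    and "clean T A B"
    and "sparse d T A B"
    and "complete R"
    and "leaves R = [1..<n+1]"
  shows "\<exists>AR BR. models_graph R AR BR E \<and> sparse (4 * d * (log 2 n)^2) R AR BR"
proof -
  have stm: "signed_tree_model T A B" using assms(3) unfolding models_graph_def by blast
  interpret ctxT T R A B n using assms(2) assms(7) stm by unfold_locales
  have mg: "models_graph R AR BR E" using adjR[OF assms(3)] .
  have c1: "real (card (AR \<union> BR)) \<le> real (card (A \<union> B)) * (real K * real K)"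
    using card_ARBR by (metis of_nat_le_iff of_nat_mult)
  have kb: "real K * real K \<le> 4 * (log 2 n)^2" using K_bound[OF assms(1) assms(6) assms(7)] unfolding K_def .
  have sp: "real (card (A \<union> B)) \<le> d * real (card (pos T))" using assms(5) unfolding sparse_def .
  have cp: "card (pos T) = card (pos R)" using card_pos[of T] card_pos[of R] assms(2) assms(7) by simp
  have "real (card (AR \<union> BR)) \<le> real (card (A \<union> B)) * (4 * (log 2 n)^2)"
    using c1 kb by (meson mult_left_mono of_nat_0_le_iff order_trans)
  also have "\<dots> \<le> d * real (card (pos T)) * (4 * (log 2 n)^2)"
    using sp by (intro mult_right_mono) auto
  also have "\<dots> = 4 * d * (log 2 n)^2 * real (card (pos R))" using cp by simp
  finally have "sparse (4 * d * (log 2 n)^2) R AR BR" unfolding sparse_def .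
  then show ?thesis using mg by blast
qed


end
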